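(* Let $G_{\lambda,k}$ be a skeleton of a connected graph $G$ with natural map $f$, and let $P_1,P_2$ be paths in $G_{\lambda,k}$ such that $d(u,v)>1$ for all vertices $u\in P_1$, $v\in P_2$. Then, for $M=\min\{\lambda,k\}$, $N_{M/2}(f^{-1}(P_1))\cap N_{M/2}(f^{-1}(P_2))=\emptyset$.
   Context: $d$ is the graph metric. $N_r(S)=\{y: d(s,y)<r\text{ for some } s\in S\}$ (in $G$). A set $X$ is $k$-connected if any two of its points are joined by a finite sequence in $X$ with consecutive distances $\le k$. Skeleton $G_{\lambda,k}$ (root $x_0\in V(G)$, scale $\lambda\ge1$, connectivity $k\ge1$): layers $A_{N,\lambda}=\{x: N\lambda<d(x,x_0)\le(N+1)\lambda\}$, $N\in\mathbb Z$; blocks are the maximal $k$-connected subsets of layers; $G_{\lambda,k}$ has a vertex per block and an edge between two blocks iff an edge of $G$ joins them. The natural map $f$ sends each vertex of $G$ to its block; $f^{-1}(P)$ is the union of the blocks that are vertices of $P$. *)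

theory Defs
  imports Main "HOL-Library.Extended_Nat"
begin

definition graph :: "'a set \<Rightarrow> ('a \<Rightarrow> 'a \<Rightarrow> bool) \<Rightarrow> bool" where
  "graph V E \<longleftrightarrow> (\<forall>x y. E x y \<longrightarrow> x \<in> V \<and> y \<in> V \<and> E y x)"

definition walk :: "('a \<Rightarrow> 'a \<Rightarrow> bool) \<Rightarrow> 'a list \<Rightarrow> bool" where
  "walk E xs \<longleftrightarrow> xs \<noteq> [] \<and> (\<forall>i < length xs - 1. E (xs ! i) (xs ! Suc i))"

definition gdist :: "('a \<Rightarrow> 'a \<Rightarrow> bool) \<Rightarrow> 'a \<Rightarrow> 'a \<Rightarrow> enat" where
  "gdist E x y = (INF xs \<in> {xs. walk E xs \<and> hd xs = x \<and> last xs = y}. enat (length xs - 1))"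

definition connected_graph :: "'a set \<Rightarrow> ('a \<Rightarrow> 'a \<Rightarrow> bool) \<Rightarrow> bool" where
  "connected_graph V E \<longleftrightarrow> graph V E \<and> V \<noteq> {} \<and> (\<forall>x\<in>V. \<forall>y\<in>V. gdist E x y < \<infinity>)"

definition nbhd :: "'a set \<Rightarrow> ('a \<Rightarrow> 'a \<Rightarrow> bool) \<Rightarrow> real \<Rightarrow> 'a set \<Rightarrow> 'a set" where
  "nbhd V E r S = {y \<in> V. \<exists>s\<in>S. \<exists>n::nat. gdist E s y = enat n \<and> real n < r}"

definition kconnected :: "('a \<Rightarrow> 'a \<Rightarrow> bool) \<Rightarrow> nat \<Rightarrow> 'a set \<Rightarrow> bool" where
  "kconnected E k X \<longleftrightarrow> (\<forall>x\<in>X. \<forall>y\<in>X. \<exists>xs. xs \<noteq> [] \<and> hd xs = x \<and> last xs = y \<and> set xs \<subseteq> X \<and>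
      (\<forall>i < length xs - 1. gdist E (xs ! i) (xs ! Suc i) \<le> enat k))"

definition layer :: "'a set \<Rightarrow> ('a \<Rightarrow> 'a \<Rightarrow> bool) \<Rightarrow> 'a \<Rightarrow> real \<Rightarrow> int \<Rightarrow> 'a set" where
  "layer V E x0 lam N = {x \<in> V. \<exists>n::nat. gdist E x x0 = enat n \<and>
      real_of_int N * lam < real n \<and> real n \<le> (real_of_int N + 1) * lam}"

definition blocks :: "'a set \<Rightarrow> ('a \<Rightarrow> 'a \<Rightarrow> bool) \<Rightarrow> 'a \<Rightarrow> real \<Rightarrow> nat \<Rightarrow> 'a set set" where
  "blocks V E x0 lam k = {B. \<exists>N. B \<noteq> {} \<and> B \<subseteq> layer V E x0 lam N \<and> kconnected E k B \<and>
      (\<forall>C. B \<subseteq> C \<and> C \<subseteq> layer V E x0 lam N \<and> kconnected E k C \<longrightarrow> C = B)}"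

definition skel_edge :: "'a set \<Rightarrow> ('a \<Rightarrow> 'a \<Rightarrow> bool) \<Rightarrow> 'a \<Rightarrow> real \<Rightarrow> nat \<Rightarrow> 'a set \<Rightarrow> 'a set \<Rightarrow> bool" where
  "skel_edge V E x0 lam k B1 B2 \<longleftrightarrow> B1 \<in> blocks V E x0 lam k \<and> B2 \<in> blocks V E x0 lam k \<and> B1 \<noteq> B2 \<and>
      (\<exists>x\<in>B1. \<exists>y\<in>B2. E x y)"

definition skel_path :: "'a set \<Rightarrow> ('a \<Rightarrow> 'a \<Rightarrow> bool) \<Rightarrow> 'a \<Rightarrow> real \<Rightarrow> nat \<Rightarrow> 'a set list \<Rightarrow> bool" where
  "skel_path V E x0 lam k P \<longleftrightarrow> set P \<subseteq> blocks V E x0 lam k \<and> distinct P \<and> walk (skel_edge V E x0 lam k) P"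

text \<open>Preimage under the natural map f of a path: union of its blocks.\<close>
definition preim :: "'a set list \<Rightarrow> 'a set" where
  "preim P = \<Union> (set P)"

end

theory Submission
  imports Defs
begin


lemma walk_succ: "walk E xs \<longleftrightarrow> xs \<noteq> [] \<and> successively E xs"
  unfolding walk_def successively_conv_nth by (auto simp: less_diff_conv)

lemma gdist_le: "walk E xs \<Longrightarrow> hd xs = x \<Longrightarrow> last xs = y \<Longrightarrow> gdist E x y \<le> enat (length xs - 1)"
  unfolding gdist_def by (rule INF_lower) auto

lemma gdist_obtain:
  assumes "gdist E x y = enat n"
  obtains xs where "walk E xs" "hd xs = x" "last xs = y" "length xs = Suc n"
proof -
  let ?A = "(\<lambda>xs. enat (length xs - 1)) ` {xs. walk E xs \<and> hd xs = x \<and> last xs = y}"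
  have ne: "?A \<noteq> {}"
  proof
    assume "?A = {}"
    then have "gdist E x y = \<infinity>" unfolding gdist_def by (simp add: Inf_enat_def)
    with assms show False by simp
  qed
  obtain a where a: "a \<in> ?A" using ne by blast
  have "(LEAST z. z \<in> ?A) \<in> ?A" using a by (rule LeastI)
  moreover have "Inf ?A = (LEAST z. z \<in> ?A)" using ne unfolding Inf_enat_def by (rule if_not_P)
  ultimately have "Inf ?A \<in> ?A" by simp
  then obtain xs where xs: "walk E xs" "hd xs = x" "last xs = y" "gdist E x y = enat (length xs - 1)"
    unfolding gdist_def by blast
  have "length xs = Suc n" using xs(1,4) assms unfolding walk_def by auto
  with xs that show ?thesis by blast
qed

lemma walk_rev:
  assumes "graph V E" "walk E xs" shows "walk E (rev xs)"
proof -
  have sym: "E y x" if "E x y" for x y using assms(1) that unfolding graph_def by blast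
  have s: "successively E xs" "xs \<noteq> []" using assms(2) unfolding walk_succ by auto
  have "successively (\<lambda>x y. E y x) xs" by (rule successively_mono[OF s(1)]) (rule sym)
  then show ?thesis using \<open>xs \<noteq> []\<close> unfolding walk_succ by simp
qed

lemma walk_app:
  assumes "walk E xs" "walk E ys" "last xs = hd ys"
  shows "walk E (xs @ tl ys)" "hd (xs @ tl ys) = hd xs" "last (xs @ tl ys) = last ys"
    "length (xs @ tl ys) = length xs + length ys - 1"
proof -
  have ys: "ys = hd ys # tl ys" using assms(2) unfolding walk_def by simp
  have s: "successively E ys" "successively E xs" "xs \<noteq> []" using assms unfolding walk_succ by auto
  have "successively E (hd ys # tl ys)" using s ys by simp
  then have "successively E (tl ys) \<and> (tl ys = [] \<or> E (hd ys) (hd (tl ys)))"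
    unfolding successively_Cons by auto
  then show "walk E (xs @ tl ys)" unfolding walk_succ successively_append_iff
    using s assms(3) by auto
  show "hd (xs @ tl ys) = hd xs" using s by simp
  show "last (xs @ tl ys) = last ys"
  proof (cases "tl ys = []")
    case True
    then have "last ys = hd ys" using ys by (metis last_ConsL)
    then show ?thesis using True assms(3) by simp
  next
    case False
    then show ?thesis by (simp add: last_tl)
  qed
  have "length ys \<ge> 1" using ys by (metis One_nat_def Suc_le_eq length_Cons zero_less_Suc)
  then show "length (xs @ tl ys) = length xs + length ys - 1" by simp
qed

lemma gdist_sym: "graph V E \<Longrightarrow> gdist E x y = gdist E y x"
proof -
  assume g: "graph V E"
  have *: "gdist E a b \<le> gdist E b a" for a b
    unfolding gdist_def
  proof (rule INF_greatest)
    fix xs assume "xs \<in> {xs. walk E xs \<and> hd xs = b \<and> last xs = a}"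
    then have "rev xs \<in> {xs. walk E xs \<and> hd xs = a \<and> last xs = b}"
      using walk_rev[OF g] by (auto simp: walk_def hd_rev last_rev)
    then show "(INF xs\<in>{xs. walk E xs \<and> hd xs = a \<and> last xs = b}. enat (length xs - 1)) \<le> enat (length xs - 1)"
      by (metis (no_types, lifting) INF_lower length_rev)
  qed
  show ?thesis using *[of x y] *[of y x] by simp
qed

lemma gdist_walk_le:
  assumes "walk E xs" "hd xs = x" "last xs = y" "gdist E y z = enat b"
  shows "\<exists>c. gdist E x z = enat c \<and> c \<le> length xs - 1 + b"
proof -
  obtain ys where ys: "walk E ys" "hd ys = y" "last ys = z" "length ys = Suc b"
    using gdist_obtain[OF assms(4)] by blast
  note w = walk_app[OF assms(1) ys(1)]
  have "gdist E x z \<le> enat (length xs + length ys - 1 - 1)"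
    using gdist_le[OF w(1)] w assms ys by simp
  then show ?thesis using ys(4) assms(1) unfolding walk_def
    by (cases "gdist E x z") auto
qed



definition isblock where
  "isblock V E x0 lam k B N \<longleftrightarrow> B \<noteq> {} \<and> B \<subseteq> layer V E x0 lam N \<and> kconnected E k B \<and>
      (\<forall>C. B \<subseteq> C \<and> C \<subseteq> layer V E x0 lam N \<and> kconnected E k C \<longrightarrow> C = B)"

lemma blocks_isblock: "B \<in> blocks V E x0 lam k \<longleftrightarrow> (\<exists>N. isblock V E x0 lam k B N)"
  unfolding blocks_def isblock_def by blast

definition chain where
  "chain E k X x y xs \<longleftrightarrow> xs \<noteq> [] \<and> hd xs = x \<and> last xs = y \<and> set xs \<subseteq> X \<and>
      successively (\<lambda>a b. gdist E a b \<le> enat k) xs"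

lemma kconnected_chain: "kconnected E k X \<longleftrightarrow> (\<forall>x\<in>X. \<forall>y\<in>X. \<exists>xs. chain E k X x y xs)"
proof -
  have eq: "(\<forall>i < length xs - 1. gdist E (xs ! i) (xs ! Suc i) \<le> enat k) \<longleftrightarrow> successively (\<lambda>a b. gdist E a b \<le> enat k) xs" for xs
    unfolding successively_conv_nth by (auto simp: less_diff_conv)
  show ?thesis unfolding kconnected_def chain_def eq ..
qed

lemma chain_app:
  assumes "chain E k X x y xs" "chain E k Y y z ys"
  shows "chain E k (X \<union> Y) x z (xs @ tl ys)"
proof -
  let ?R = "\<lambda>a b. gdist E a b \<le> enat k"
  have ys: "ys = hd ys # tl ys" using assms(2) unfolding chain_def by (metis list.collapse)
  have "successively ?R (hd ys # tl ys)" using assms(2) ys unfolding chain_def by simp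
  then have t: "successively ?R (tl ys) \<and> (tl ys = [] \<or> ?R (hd ys) (hd (tl ys)))"
    unfolding successively_Cons by auto
  have "last (xs @ tl ys) = last ys"
  proof (cases "tl ys = []")
    case True
    then have "last ys = hd ys" using ys by (metis last_ConsL)
    then show ?thesis using True assms unfolding chain_def by simp
  next
    case False
    then show ?thesis by (simp add: last_tl)
  qed
  then have "last (xs @ tl ys) = z" using assms(2) unfolding chain_def by simp
  moreover have "set (tl ys) \<subseteq> set ys" by (cases ys) auto
  then have "set (tl ys) \<subseteq> Y" using assms(2) unfolding chain_def by blast
  ultimately show ?thesis using assms t unfolding chain_def successively_append_iff by auto
qed

lemma chain_mono: "chain E k X x y xs \<Longrightarrow> X \<subseteq> Y \<Longrightarrow> chain E k Y x y xs"
  unfolding chain_def by auto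

lemma kconnected_Un:
  assumes "kconnected E k X" "kconnected E k Y" "c \<in> X" "c \<in> Y"
  shows "kconnected E k (X \<union> Y)"
  unfolding kconnected_chain
proof (intro ballI)
  fix x y assume xy: "x \<in> X \<union> Y" "y \<in> X \<union> Y"
  have cX: "\<And>a b. a \<in> X \<Longrightarrow> b \<in> X \<Longrightarrow> \<exists>xs. chain E k (X \<union> Y) a b xs"
  proof -
    fix a b assume "a \<in> X" "b \<in> X"
    then obtain xs where "chain E k X a b xs" using assms(1) unfolding kconnected_chain by blast
    then have "chain E k (X \<union> Y) a b xs" by (rule chain_mono) blast
    then show "\<exists>xs. chain E k (X \<union> Y) a b xs" by blast
  qed
  have cY: "\<And>a b. a \<in> Y \<Longrightarrow> b \<in> Y \<Longrightarrow> \<exists>xs. chain E k (X \<union> Y) a b xs"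
  proof -
    fix a b assume "a \<in> Y" "b \<in> Y"
    then obtain xs where "chain E k Y a b xs" using assms(2) unfolding kconnected_chain by blast
    then have "chain E k (X \<union> Y) a b xs" by (rule chain_mono) blast
    then show "\<exists>xs. chain E k (X \<union> Y) a b xs" by blast
  qed
  have tr: "\<exists>xs. chain E k (X \<union> Y) a b xs" if h: "\<exists>xs. chain E k (X \<union> Y) a c xs" "\<exists>xs. chain E k (X \<union> Y) c b xs" for a b
  proof -
    obtain xs ys where "chain E k (X \<union> Y) a c xs" "chain E k (X \<union> Y) c b ys" using h by blast
    from chain_app[OF this] show ?thesis by auto
  qed
  show "\<exists>xs. chain E k (X \<union> Y) x y xs"
  proof (cases "x \<in> X")
    case xX: True
    show ?thesis
    proof (cases "y \<in> X")
      case True then show ?thesis using cX xX by blast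
    next
      case False then have "y \<in> Y" using xy by blast
      then show ?thesis using tr cX cY xX assms(3,4) by blast
    qed
  next
    case False then have xY: "x \<in> Y" using xy by blast
    show ?thesis
    proof (cases "y \<in> Y")
      case True then show ?thesis using cY xY by blast
    next
      case False then have "y \<in> X" using xy by blast
      then show ?thesis using tr cX cY xY assms(3,4) by blast
    qed
  qed
qed

lemma kconnected_pair:
  assumes "gdist E s p \<le> enat k" "gdist E p s \<le> enat k"
  shows "kconnected E k {s, p}"
proof -
  have z: "gdist E a a \<le> enat k" for a
  proof -
    have "gdist E a a \<le> enat 0" using gdist_le[of E "[a]" a a] by (simp add: walk_def)
    also have "enat 0 \<le> enat k" by simp
    finally show ?thesis .
  qed
  show ?thesis unfolding kconnected_chain
  proof (intro ballI)
    fix x y assume "x \<in> {s,p}" "y \<in> {s,p}"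
    then have "chain E k {s,p} x y [x,y]" using assms z unfolding chain_def by auto
    then show "\<exists>xs. chain E k {s, p} x y xs" by blast
  qed
qed

lemma isblock_max: "isblock V E x0 lam k B N \<Longrightarrow> B \<subseteq> C \<Longrightarrow> C \<subseteq> layer V E x0 lam N \<Longrightarrow> kconnected E k C \<Longrightarrow> C = B"
  unfolding isblock_def by (elim conjE allE impE) (rule conjI, assumption, rule conjI, assumption, assumption, assumption)

lemma isblock_D: "isblock V E x0 lam k B N \<Longrightarrow> B \<subseteq> layer V E x0 lam N \<and> kconnected E k B"
  unfolding isblock_def by blast

lemma absorb:
  assumes "isblock V E x0 lam k B N" "s \<in> B" "p \<in> layer V E x0 lam N"
    "gdist E s p \<le> enat k" "graph V E"
  shows "p \<in> B"
proof -
  have "gdist E p s \<le> enat k" using gdist_sym[OF assms(5), of p s] assms(4) by simp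
  then have "kconnected E k {s,p}" by (rule kconnected_pair[OF assms(4)])
  then have "kconnected E k (B \<union> {s,p})" using kconnected_Un[of E k B "{s,p}" s] isblock_D[OF assms(1)] assms(2) by simp
  moreover have "B \<union> {s,p} \<subseteq> layer V E x0 lam N" using isblock_D[OF assms(1)] assms(2,3) by blast
  ultimately have "B \<union> {s,p} = B" by (intro isblock_max[OF assms(1)]) auto
  then show ?thesis by blast
qed

lemma merge:
  assumes "isblock V E x0 lam k B1 N" "isblock V E x0 lam k B2 N" "c \<in> B1" "c \<in> B2"
  shows "B1 = B2"
proof -
  have "kconnected E k (B1 \<union> B2)" using kconnected_Un[of E k B1 B2 c] isblock_D[OF assms(1)] isblock_D[OF assms(2)] assms(3,4) by simp
  moreover have "B1 \<union> B2 \<subseteq> layer V E x0 lam N" using isblock_D[OF assms(1)] isblock_D[OF assms(2)] by blast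
  ultimately have u: "kconnected E k (B1 \<union> B2) \<and> B1 \<union> B2 \<subseteq> layer V E x0 lam N" by blast
  have "B1 \<union> B2 = B1" using u by (intro isblock_max[OF assms(1)]) auto
  moreover have "B1 \<union> B2 = B2" using u by (intro isblock_max[OF assms(2)]) auto
  ultimately
  show ?thesis by blast
qed



lemma walk_take: "walk E w \<Longrightarrow> 0 < n \<Longrightarrow> n \<le> length w \<Longrightarrow> walk E (take n w)"
  unfolding walk_def by auto

lemma walk_drop: "walk E w \<Longrightarrow> n < length w \<Longrightarrow> walk E (drop n w)"
  unfolding walk_def by auto

lemma walk_pair: "walk E [a,b] \<longleftrightarrow> E a b"
  unfolding walk_def by auto

lemma layer_disj:
  assumes "x \<in> layer V E x0 lam N1" "x \<in> layer V E x0 lam N2" "N1 < N2" "lam > 0"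
  shows False
proof -
  obtain n where n: "gdist E x x0 = enat n" "real n \<le> (real_of_int N1 + 1) * lam"
    using assms(1) unfolding layer_def by auto
  obtain n' where n': "gdist E x x0 = enat n'" "real_of_int N2 * lam < real n'"
    using assms(2) unfolding layer_def by auto
  have "n = n'" using n n' by simp
  have "real_of_int N1 + 1 \<le> real_of_int N2" using assms(3) by linarith
  then have "(real_of_int N1 + 1) * lam \<le> real_of_int N2 * lam" using assms(4) by (simp add: mult_right_mono)
  then show False using n n' \<open>n = n'\<close> by linarith
qed

lemma cross:
  assumes conn: "connected_graph V E" and x0: "x0 \<in> V" and lam: "lam \<ge> 1"
    and b1: "isblock V E x0 lam k B1 N1" and b2: "isblock V E x0 lam k B2 N2" and N: "N1 < N2"
    and s1: "s1 \<in> B1" and s2: "s2 \<in> B2"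
    and w: "walk E w" "hd w = s1" "last w = s2" "length w = Suc m"
    and m: "real m < lam" "m \<le> k"
  shows "\<exists>p\<in>B1. \<exists>q\<in>B2. E p q"
proof -
  have g: "graph V E" using conn unfolding connected_graph_def by blast
  have gE: "a \<in> V \<and> b \<in> V \<and> E b a" if "E a b" for a b using g that unfolding graph_def by blast
  define D where "D x = the_enat (gdist E x x0)" for x
  have DV: "gdist E x x0 = enat (D x)" if "x \<in> V" for x
  proof -
    have "gdist E x x0 < \<infinity>" using conn that x0 unfolding connected_graph_def by blast
    then show ?thesis unfolding D_def by (cases "gdist E x x0") auto
  qed
  have lay: "x \<in> layer V E x0 lam N \<longleftrightarrow> x \<in> V \<and> real_of_int N * lam < real (D x) \<and> real (D x) \<le> (real_of_int N + 1) * lam" for x N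
    unfolding layer_def using DV by auto
  have wne: "w \<noteq> []" using w(4) by auto
  have wnth0: "w ! 0 = s1" using w(2) wne by (simp add: hd_conv_nth)
  have wnthm: "w ! m = s2" using w(3,4) wne by (simp add: last_conv_nth)
  have wE: "E (w ! j) (w ! Suc j)" if "j < m" for j using w that unfolding walk_def by auto
  have s1V: "s1 \<in> V" using b1 s1 unfolding isblock_def layer_def by auto
  have wV: "w ! j \<in> V" if "j \<le> m" for j
  proof (cases j)
    case 0 then show ?thesis using wnth0 s1V by simp
  next
    case (Suc j')
    then have "j' < m" using that by simp
    then show ?thesis using wE[of j'] gE Suc by blast
  qed
  have step1: "D a \<le> D b + 1" if ab: "E a b" "a \<in> V" "b \<in> V" for a b
  proof -
    have wab: "walk E [a,b]" using that walk_pair by metis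
    obtain c where "gdist E a x0 = enat c" "c \<le> length [a,b] - 1 + D b"
      using gdist_walk_le[OF wab _ _ DV[OF ab(3)]] by auto
    then show ?thesis using DV ab by simp
  qed
  have stepU: "D (w ! Suc j) \<le> D (w ! j) + 1" "D (w ! j) \<le> D (w ! Suc j) + 1" if jm: "j < m" for j
  proof -
    have e: "E (w ! j) (w ! Suc j)" by (rule wE[OF jm])
    have v: "w ! j \<in> V" "w ! Suc j \<in> V" using wV jm by auto
    show "D (w ! Suc j) \<le> D (w ! j) + 1" by (rule step1[OF conjunct2[OF conjunct2[OF gE[OF e]]] v(2) v(1)])
    show "D (w ! j) \<le> D (w ! Suc j) + 1" by (rule step1[OF e v])
  qed
  have l1: "real_of_int N1 * lam < real (D s1)" "real (D s1) \<le> (real_of_int N1 + 1) * lam"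
    using b1 s1 lay unfolding isblock_def by auto
  have l2: "real_of_int N2 * lam < real (D s2)" "real (D s2) \<le> (real_of_int N2 + 1) * lam"
    using b2 s2 lay unfolding isblock_def by auto
  have "D s2 \<le> m + D s1"
  proof -
    have rw: "walk E (rev w)" using walk_rev[OF g w(1)] .
    have "hd (rev w) = s2" "last (rev w) = s1" using w by (auto simp: hd_rev last_rev)
    then obtain c where "gdist E s2 x0 = enat c" "c \<le> length (rev w) - 1 + D s1"
      using gdist_walk_le[OF rw _ _ DV[OF s1V]] by blast
    then show ?thesis using DV[of s2] wV[of m] wnthm w(4) by simp
  qed
  then have "real_of_int N2 * lam < (real_of_int N1 + 2) * lam" using l1 l2 m(1) by (simp add: algebra_simps)
  then have "real_of_int N2 < real_of_int N1 + 2" using lam by (simp add: mult_less_cancel_right)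
  then have N2: "N2 = N1 + 1" using N by linarith
  define S where "S = {j. j \<le> m \<and> real (D (w ! j)) \<le> (real_of_int N1 + 1) * lam}"
  define i where "i = Max S"
  have finS: "finite S" unfolding S_def by simp
  have "0 \<in> S" unfolding S_def using wnth0 l1 by simp
  then have iS: "i \<in> S" unfolding i_def using finS Max_in by blast
  have "(real_of_int N1 + 1) * lam \<le> real_of_int N2 * lam" using N2 lam by simp
  then have "m \<notin> S" unfolding S_def using wnthm l2 by auto
  then have im: "i < m" using iS unfolding S_def by (cases "i = m") auto
  have "Suc i \<notin> S"
  proof
    assume "Suc i \<in> S"
    then have "Suc i \<le> i" unfolding i_def using Max_ge[OF finS] by blast
    then show False by simp
  qed
  then have q_hi: "real (D (w ! Suc i)) > (real_of_int N1 + 1) * lam" using im unfolding S_def by auto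
  have p_lo: "real (D (w ! i)) \<le> (real_of_int N1 + 1) * lam" using iS unfolding S_def by auto
  have qp: "real (D (w ! Suc i)) \<le> real (D (w ! i)) + 1"
  proof -
    have "real (D (w ! Suc i)) \<le> real (D (w ! i) + 1)" using stepU(1)[OF im] by (simp only: of_nat_le_iff)
    then show ?thesis by simp
  qed
  have "real (D (w ! i)) > real_of_int N1 * lam" using qp q_hi lam by (simp add: algebra_simps)
  then have pL: "w ! i \<in> layer V E x0 lam N1" using lay p_lo wV im by auto
  have "real (D (w ! Suc i)) \<le> (real_of_int N2 + 1) * lam" using qp p_lo lam N2 by (simp add: algebra_simps)
  then have qL: "w ! Suc i \<in> layer V E x0 lam N2" using lay q_hi wV im N2 by auto
  have lt: "last (take (Suc i) w) = w ! i"
    using w(4) im by (subst last_conv_nth) auto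
  have "gdist E s1 (w ! i) \<le> enat (length (take (Suc i) w) - 1)"
    by (rule gdist_le[OF walk_take[OF w(1)]]) (use w im wnth0 lt in \<open>auto simp: hd_conv_nth\<close>)
  moreover have "length (take (Suc i) w) - 1 \<le> k" using w(4) im m(2) by simp
  ultimately have d1: "gdist E s1 (w ! i) \<le> enat k" by (meson enat_ord_simps(1) order_trans)
  have "gdist E (w ! Suc i) s2 \<le> enat (length (drop (Suc i) w) - 1)"
    by (rule gdist_le[OF walk_drop[OF w(1)]]) (use w im in \<open>auto simp: hd_drop_conv_nth\<close>)
  moreover have "length (drop (Suc i) w) - 1 \<le> k" using w(4) im m(2) by simp
  ultimately have "gdist E (w ! Suc i) s2 \<le> enat k" by (meson enat_ord_simps(1) order_trans)
  then have d2: "gdist E s2 (w ! Suc i) \<le> enat k" using gdist_sym[OF g, of s2 "w ! Suc i"] by simp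
  have "w ! i \<in> B1" by (rule absorb[OF b1 s1 pL d1 g])
  moreover have "w ! Suc i \<in> B2" by (rule absorb[OF b2 s2 qL d2 g])
  ultimately show ?thesis using wE[OF im] by blast
qed



lemma key:
  assumes conn: "connected_graph V E" and x0: "x0 \<in> V" and lam: "lam \<ge> 1"
    and b1: "isblock V E x0 lam k B1 N1" and b2: "isblock V E x0 lam k B2 N2"
    and s1: "s1 \<in> B1" and s2: "s2 \<in> B2"
    and w: "walk E w" "hd w = s1" "last w = s2" "length w = Suc m"
    and m: "real m < lam" "m \<le> k"
  shows "B1 = B2 \<or> (\<exists>p\<in>B1. \<exists>q\<in>B2. E p q) \<and> B1 \<noteq> B2 \<or> (\<exists>p\<in>B2. \<exists>q\<in>B1. E p q) \<and> B1 \<noteq> B2"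
proof -
  have g: "graph V E" using conn unfolding connected_graph_def by blast
  consider "N1 = N2" | "N1 < N2" | "N2 < N1" by linarith
  then show ?thesis
  proof cases
    case 1
    have "s2 \<in> layer V E x0 lam N1" using b2 s2 1 unfolding isblock_def by auto
    moreover have "gdist E s1 s2 \<le> enat k"
    proof -
      have "length w - 1 \<le> k" using w(4) m(2) by simp
      then show ?thesis using gdist_le[OF w(1-3)] by (meson enat_ord_simps(1) order_trans)
    qed
    ultimately have "s2 \<in> B1" using absorb[OF b1 s1 _ _ g] by blast
    then have "B1 = B2" using merge[OF b1] b2 s2 1 by blast
    then show ?thesis by blast
  next
    case 2
    have ne: "B1 \<noteq> B2"
    proof
      assume "B1 = B2"
      then have "s2 \<in> layer V E x0 lam N1" "s2 \<in> layer V E x0 lam N2" using b1 b2 s2 unfolding isblock_def by auto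
      then show False using layer_disj 2 lam by force
    qed
    show ?thesis using cross[OF conn x0 lam b1 b2 2 s1 s2 w m] ne by blast
  next
    case 3
    have ne: "B1 \<noteq> B2"
    proof
      assume "B1 = B2"
      then have "s1 \<in> layer V E x0 lam N1" "s1 \<in> layer V E x0 lam N2" using b1 b2 s1 unfolding isblock_def by auto
      then show False using layer_disj 3 lam by force
    qed
    have rw: "walk E (rev w)" "hd (rev w) = s2" "last (rev w) = s1" "length (rev w) = Suc m"
      using walk_rev[OF g w(1)] w by (auto simp: hd_rev last_rev)
    show ?thesis using cross[OF conn x0 lam b2 b1 3 s2 s1 rw m] ne by blast
  qed
qed

theorem corollary8:
  fixes V :: "'a set" and E :: "'a \<Rightarrow> 'a \<Rightarrow> bool" and x0 :: 'a
    and lam :: real and k :: nat and P1 P2 :: "'a set list"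
  assumes "connected_graph V E" and "x0 \<in> V" and "lam \<ge> 1" and "k \<ge> 1"
    and "skel_path V E x0 lam k P1" and "skel_path V E x0 lam k P2"
    and "\<forall>u\<in>set P1. \<forall>v\<in>set P2. gdist (skel_edge V E x0 lam k) u v > 1"
  shows "nbhd V E (min lam (real k) / 2) (preim P1) \<inter> nbhd V E (min lam (real k) / 2) (preim P2) = {}"
proof (rule ccontr)
  assume "\<not> ?thesis"
  then obtain y where y1: "y \<in> nbhd V E (min lam (real k) / 2) (preim P1)"
    and y2: "y \<in> nbhd V E (min lam (real k) / 2) (preim P2)" by blast
  obtain s1 n1 where s1: "s1 \<in> preim P1" "gdist E s1 y = enat n1" "real n1 < min lam (real k) / 2"
    using y1 unfolding nbhd_def by blast
  obtain s2 n2 where s2: "s2 \<in> preim P2" "gdist E s2 y = enat n2" "real n2 < min lam (real k) / 2"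
    using y2 unfolding nbhd_def by blast
  obtain B1 where B1: "B1 \<in> set P1" "s1 \<in> B1" using s1 unfolding preim_def by blast
  obtain B2 where B2: "B2 \<in> set P2" "s2 \<in> B2" using s2 unfolding preim_def by blast
  have "B1 \<in> blocks V E x0 lam k" using assms(5) B1 unfolding skel_path_def by blast
  then obtain N1 where b1: "isblock V E x0 lam k B1 N1" unfolding blocks_isblock by blast
  have "B2 \<in> blocks V E x0 lam k" using assms(6) B2 unfolding skel_path_def by blast
  then obtain N2 where b2: "isblock V E x0 lam k B2 N2" unfolding blocks_isblock by blast
  have g: "graph V E" using assms(1) unfolding connected_graph_def by blast
  obtain w1 where w1: "walk E w1" "hd w1 = s1" "last w1 = y" "length w1 = Suc n1"
    using gdist_obtain[OF s1(2)] by blast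
  obtain w2 where w2: "walk E w2" "hd w2 = s2" "last w2 = y" "length w2 = Suc n2"
    using gdist_obtain[OF s2(2)] by blast
  have rw2: "walk E (rev w2)" "hd (rev w2) = y" "last (rev w2) = s2" "length (rev w2) = Suc n2"
    using walk_rev[OF g w2(1)] w2 by (auto simp: hd_rev last_rev)
  note wa = walk_app[OF w1(1) rw2(1)]
  have w: "walk E (w1 @ tl (rev w2))" "hd (w1 @ tl (rev w2)) = s1" "last (w1 @ tl (rev w2)) = s2"
    "length (w1 @ tl (rev w2)) = Suc (n1 + n2)"
    using wa w1 rw2 by auto
  have m: "real (n1 + n2) < lam" "n1 + n2 \<le> k" using s1(3) s2(3) by auto
  have "B1 = B2 \<or> (\<exists>p\<in>B1. \<exists>q\<in>B2. E p q) \<and> B1 \<noteq> B2 \<or> (\<exists>p\<in>B2. \<exists>q\<in>B1. E p q) \<and> B1 \<noteq> B2"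
    by (rule key[OF assms(1,2,3) b1 b2 B1(2) B2(2) w m])
  then have "gdist (skel_edge V E x0 lam k) B1 B2 \<le> 1"
  proof (elim disjE conjE)
    assume "B1 = B2"
    then show ?thesis using gdist_le[of "skel_edge V E x0 lam k" "[B1]" B1 B2]
      by (simp add: walk_def zero_enat_def[symmetric])
  next
    assume "\<exists>p\<in>B1. \<exists>q\<in>B2. E p q" "B1 \<noteq> B2"
    then have "skel_edge V E x0 lam k B1 B2" unfolding skel_edge_def
      using \<open>B1 \<in> blocks V E x0 lam k\<close> \<open>B2 \<in> blocks V E x0 lam k\<close> by blast
    then show ?thesis using gdist_le[of "skel_edge V E x0 lam k" "[B1,B2]" B1 B2]
      by (simp add: walk_def one_enat_def)
  next
    assume "\<exists>p\<in>B2. \<exists>q\<in>B1. E p q" "B1 \<noteq> B2"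
    then obtain p q where "p \<in> B2" "q \<in> B1" "E p q" by blast
    then have "\<exists>p\<in>B1. \<exists>q\<in>B2. E p q" using g unfolding graph_def by blast
    then have "skel_edge V E x0 lam k B1 B2" unfolding skel_edge_def
      using \<open>B1 \<noteq> B2\<close> \<open>B1 \<in> blocks V E x0 lam k\<close> \<open>B2 \<in> blocks V E x0 lam k\<close> by blast
    then show ?thesis using gdist_le[of "skel_edge V E x0 lam k" "[B1,B2]" B1 B2]
      by (simp add: walk_def one_enat_def)
  qed
  then show False using assms(7) B1(1) B2(1) by force
qed


end
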